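(* Define functions $b_1,b_2,b_3$ on $\mathbb{R}$ by $b_1(s)=e^{1/s}$ for $s<0$, $b_1(s)=e^{-1/(s-2)}$ for $s>2$, $b_1(s)=0$ otherwise; $b_2(s)=e^{-1/(s(1-s))}$ for $0<s<1$, $b_2(s)=0$ otherwise; $b_3(s)=e^{-1/((s-1)(2-s))}$ for $1<s<2$, $b_3(s)=0$ otherwise. Let $\gamma$ be a curve in $\mathbb{E}^4$ with a Bishop frame $\mathbb{B}$ whose coefficient matrix is $\begin{pmatrix}0&b_1&b_2&b_3\\-b_1&0&0&0\\-b_2&0&0&0\\-b_3&0&0&0\end{pmatrix}$. Then $\gamma$ is a regular curve which does not admit a generalized Bishop frame of type C.
   Context: A regular curve $\gamma: I\to\mathbb{E}^4$ ($I$ an open interval) is considered with arc-length parametrization; $\mathbb{T}=\gamma'$ is its unit tangent vector. A frame on $\gamma$ is an ordered orthonormal frame $(\mathbb{T},\mathbb{Z}_1,\mathbb{Z}_2,\mathbb{Z}_3)$ of smooth vector fields along $\gamma$ whose first vector is $\mathbb{T}$; it is identified with the smooth map $\mathbb{Z}: I\to O(4)$ whose rows are these vectors. Its coefficient matrix is the $\mathfrak{o}(4)$-valued function $X$ with $\mathbb{Z}'=X\mathbb{Z}$. A Bishop frame is a frame whose coefficient matrix has the form given in the claim (with some functions in place of $b_1,b_2,b_3$). A frame is of type C if, after possibly permuting $\mathbb{Z}_1,\mathbb{Z}_2,\mathbb{Z}_3$ (keeping $\mathbb{T}$ first), its coefficient matrix has the form $\begin{pmatrix}0&x_1&x_2&0\\-x_1&0&0&x_3\\-x_2&0&0&0\\0&-x_3&0&0\end{pmatrix}$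 for some smooth functions $x_1,x_2,x_3$. *)

theory Defs
  imports "HOL-Analysis.Analysis"
begin

definition smooth_fun :: "(real \<Rightarrow> 'a::real_normed_vector) \<Rightarrow> bool" where
  "smooth_fun f \<longleftrightarrow> (\<exists>D :: nat \<Rightarrow> real \<Rightarrow> 'a. D 0 = f \<and>
      (\<forall>n t. (D n has_vector_derivative D (Suc n) t) (at t)))"

text \<open>Regular curve in E^4 (parameter interval = the whole real line).\<close>
definition regular_curve :: "(real \<Rightarrow> real^4) \<Rightarrow> bool" where
  "regular_curve \<gamma> \<longleftrightarrow> smooth_fun \<gamma> \<and>
      (\<forall>t. \<gamma> differentiable (at t) \<and> vector_derivative \<gamma> (at t) \<noteq> 0)"

text \<open>A frame on gamma: F t 0 = T (the tangent gamma'), F t 1, F t 2, F t 3 = Z1, Z2, Z3;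
  smooth, orthonormal at every parameter.\<close>
definition is_frame :: "(real \<Rightarrow> real^4) \<Rightarrow> (real \<Rightarrow> nat \<Rightarrow> real^4) \<Rightarrow> bool" where
  "is_frame \<gamma> F \<longleftrightarrow>
     (\<forall>i<4. smooth_fun (\<lambda>t. F t i)) \<and>
     (\<forall>t. \<forall>i<4. \<forall>j<4. F t i \<bullet> F t j = (if i = j then 1 else 0)) \<and>
     (\<forall>t. (\<gamma> has_vector_derivative F t 0) (at t))"

text \<open>X is the coefficient matrix of F, i.e. Z' = X Z (rows of Z are the frame vectors).\<close>
definition coeff_matrix :: "(real \<Rightarrow> nat \<Rightarrow> real^4) \<Rightarrow> (real \<Rightarrow> nat \<Rightarrow> nat \<Rightarrow> real) \<Rightarrow> bool" where
  "coeff_matrix F X \<longleftrightarrow>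
     (\<forall>t. \<forall>i<4. ((\<lambda>s. F s i) has_vector_derivative (\<Sum>j<4. X t i j *\<^sub>R F t j)) (at t))"

definition typeC_matrix :: "(real \<Rightarrow> real) \<Rightarrow> (real \<Rightarrow> real) \<Rightarrow> (real \<Rightarrow> real) \<Rightarrow> real \<Rightarrow> nat \<Rightarrow> nat \<Rightarrow> real" where
  "typeC_matrix x1 x2 x3 t i j =
     (if i = 0 \<and> j = 1 then x1 t else if i = 0 \<and> j = 2 then x2 t
      else if i = 1 \<and> j = 0 then - x1 t else if i = 2 \<and> j = 0 then - x2 t
      else if i = 1 \<and> j = 3 then x3 t else if i = 3 \<and> j = 1 then - x3 t
      else 0)"

definition typeC_frame :: "(real \<Rightarrow> real^4) \<Rightarrow> (real \<Rightarrow> nat \<Rightarrow> real^4) \<Rightarrow> bool" where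
  "typeC_frame \<gamma> F \<longleftrightarrow> is_frame \<gamma> F \<and>
     (\<exists>p x1 x2 x3. p permutes {1,2,3} \<and> smooth_fun x1 \<and> smooth_fun x2 \<and> smooth_fun x3 \<and>
        coeff_matrix (\<lambda>t i. F t (p i)) (typeC_matrix x1 x2 x3))"

definition b1 :: "real \<Rightarrow> real" where
  "b1 s = (if s < 0 then exp (1 / s) else if s > 2 then exp (- 1 / (s - 2)) else 0)"

definition b2 :: "real \<Rightarrow> real" where
  "b2 s = (if 0 < s \<and> s < 1 then exp (- 1 / (s * (1 - s))) else 0)"

definition b3 :: "real \<Rightarrow> real" where
  "b3 s = (if 1 < s \<and> s < 2 then exp (- 1 / ((s - 1) * (2 - s))) else 0)"

definition bishopB :: "real \<Rightarrow> nat \<Rightarrow> nat \<Rightarrow> real" where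
  "bishopB t i j =
     (if i = 0 \<and> j = 1 then b1 t else if i = 0 \<and> j = 2 then b2 t
      else if i = 0 \<and> j = 3 then b3 t
      else if i = 1 \<and> j = 0 then - b1 t else if i = 2 \<and> j = 0 then - b2 t
      else if i = 3 \<and> j = 0 then - b3 t else 0)"

end

theory Submission imports Defs begin

lemma expand4:
  fixes u :: "nat \<Rightarrow> real^4" and x :: "real^4"
  assumes on: "\<forall>i<4. \<forall>j<4. u i \<bullet> u j = (if i = j then 1 else 0)"
  shows "x = (\<Sum>i<4. (x \<bullet> u i) *\<^sub>R u i)"
proof (rule ccontr)
  define y where "y = x - (\<Sum>i<4. (x \<bullet> u i) *\<^sub>R u i)"
  assume "x \<noteq> (\<Sum>i<4. (x \<bullet> u i) *\<^sub>R u i)"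
  hence y0: "y \<noteq> 0" by (simp add: y_def)
  have yu: "y \<bullet> u j = 0" if "j < 4" for j
  proof -
    have "(\<Sum>i<4. (x \<bullet> u i) *\<^sub>R u i) \<bullet> u j = (\<Sum>i<4. (x \<bullet> u i) * (u i \<bullet> u j))"
      by (simp add: inner_sum_left)
    also have "\<dots> = (\<Sum>i<4. if i = j then x \<bullet> u j else 0)"
      using on that by (intro sum.cong) auto
    also have "\<dots> = x \<bullet> u j" using that by simp
    finally show ?thesis by (simp add: y_def inner_diff_left)
  qed
  define S where "S = insert y (u ` {..<4})"
  have ynot: "y \<notin> u ` {..<4}"
  proof
    assume "y \<in> u ` {..<4}"
    then obtain j where "j < 4" "y = u j" by auto
    thus False using yu[of j] on by auto
  qed
  have inj: "inj_on u {..<4}"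
  proof (rule inj_onI)
    fix i j assume "i \<in> {..<4::nat}" "j \<in> {..<4::nat}" "u i = u j"
    thus "i = j" using on by (metis lessThan_iff zero_neq_one)
  qed
  have "pairwise orthogonal S"
    unfolding S_def pairwise_def orthogonal_def using on yu
    by (auto simp: inner_commute)
  moreover have "0 \<notin> S" unfolding S_def using y0 on by force
  ultimately have "independent S" by (rule pairwise_orthogonal_independent)
  hence "card S \<le> 4" using independent_bound by fastforce
  moreover have "card S = 5" unfolding S_def using ynot inj
    by (simp add: card_image)
  ultimately show False by simp
qed

lemma inner_const:
  fixes u v :: "real \<Rightarrow> real^4"
  assumes "\<And>t. (u has_vector_derivative u' t) (at t)"
    "\<And>t. (v has_vector_derivative v' t) (at t)"
    "\<And>t. u t \<bullet> v' t + u' t \<bullet> v t = 0"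
  shows "u s \<bullet> v s = u r \<bullet> v r"
proof -
  have "((\<lambda>t. u t \<bullet> v t) has_real_derivative 0) (at t)" for t
  proof -
    have "((\<lambda>t. u t \<bullet> v t) has_derivative (\<lambda>h. u t \<bullet> (h *\<^sub>R v' t) + (h *\<^sub>R u' t) \<bullet> v t)) (at t)"
      using assms(1,2)[of t] unfolding has_vector_derivative_def
      by (rule has_derivative_inner)
    moreover have "(\<lambda>h. u t \<bullet> (h *\<^sub>R v' t) + (h *\<^sub>R u' t) \<bullet> v t) = (*) 0"
    proof
      fix h :: real
      have "u t \<bullet> (h *\<^sub>R v' t) + (h *\<^sub>R u' t) \<bullet> v t = h * (u t \<bullet> v' t + u' t \<bullet> v t)"
        by (simp add: algebra_simps)
      thus "u t \<bullet> (h *\<^sub>R v' t) + (h *\<^sub>R u' t) \<bullet> v t = 0 * h" using assms(3)[of t] by simp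
    qed
    ultimately show ?thesis by (simp add: has_field_derivative_def)
  qed
  thus ?thesis by (intro DERIV_isconst_all) auto
qed

lemma zero_ends:
  fixes f :: "real \<Rightarrow> real"
  assumes "\<And>t. isCont f t" "a < b" "\<And>t. a < t \<Longrightarrow> t < b \<Longrightarrow> f t = 0"
  shows "f a = 0" "f b = 0"
proof -
  have c: "continuous_on (closure {a<..<b}) f"
    using assms(1) by (intro continuous_at_imp_continuous_on) auto
  show "f a = 0" using continuous_constant_on_closure[OF c, of 0 a] assms by auto
  show "f b = 0" using continuous_constant_on_closure[OF c, of 0 b] assms by auto
qed


lemma key:
  fixes u :: "nat \<Rightarrow> real^4"
  assumes on: "\<forall>i<4. \<forall>j<4. u i \<bullet> u j = (if i = j then 1 else 0)"
    and N1: "N \<bullet> N = 1" and VN: "V \<bullet> N = 0" and k: "k < 4"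
    and Nz: "\<And>i. i < 4 \<Longrightarrow> i \<noteq> k \<Longrightarrow> N \<bullet> u i = 0"
  shows "V \<bullet> u k = 0"
proof -
  have "N = (\<Sum>i<4. (N \<bullet> u i) *\<^sub>R u i)" by (rule expand4[OF on])
  also have "\<dots> = (\<Sum>i\<in>{k}. (N \<bullet> u i) *\<^sub>R u i)"
    using k Nz by (intro sum.mono_neutral_right) auto
  finally have Ne: "N = (N \<bullet> u k) *\<^sub>R u k" by simp
  have "1 = ((N \<bullet> u k) *\<^sub>R u k) \<bullet> ((N \<bullet> u k) *\<^sub>R u k)" using N1 Ne by simp
  hence "N \<bullet> u k \<noteq> 0" by auto
  moreover have "0 = V \<bullet> ((N \<bullet> u k) *\<^sub>R u k)" using VN Ne by simp
  ultimately show ?thesis by simp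
qed

lemma allzero:
  fixes u :: "nat \<Rightarrow> real^4"
  assumes on: "\<forall>i<4. \<forall>j<4. u i \<bullet> u j = (if i = j then 1 else 0)"
    and "\<And>i. i < 4 \<Longrightarrow> V \<bullet> u i = 0"
  shows "V = 0"
proof -
  have "V = (\<Sum>i<4. (V \<bullet> u i) *\<^sub>R u i)" by (rule expand4[OF on])
  also have "\<dots> = 0" using assms(2) by simp
  finally show ?thesis .
qed

lemma bishop_sums:
  fixes B :: "real \<Rightarrow> nat \<Rightarrow> real^4"
  shows
  "(\<Sum>j<4. bishopB t 0 j *\<^sub>R B t j) = b1 t *\<^sub>R B t 1 + b2 t *\<^sub>R B t 2 + b3 t *\<^sub>R B t 3"
  "(\<Sum>j<4. bishopB t 1 j *\<^sub>R B t j) = - b1 t *\<^sub>R B t 0"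
  "(\<Sum>j<4. bishopB t 2 j *\<^sub>R B t j) = - b2 t *\<^sub>R B t 0"
  "(\<Sum>j<4. bishopB t 3 j *\<^sub>R B t j) = - b3 t *\<^sub>R B t 0"
  by (simp_all add: bishopB_def eval_nat_numeral)

lemma typeC_sums:
  fixes G :: "real \<Rightarrow> nat \<Rightarrow> real^4"
  shows
  "(\<Sum>j<4. typeC_matrix x1 x2 x3 t 0 j *\<^sub>R G t j) = x1 t *\<^sub>R G t 1 + x2 t *\<^sub>R G t 2"
  "(\<Sum>j<4. typeC_matrix x1 x2 x3 t 2 j *\<^sub>R G t j) = - x2 t *\<^sub>R G t 0"
  by (simp_all add: typeC_matrix_def eval_nat_numeral)

lemma bvals:
  "t < 0 \<Longrightarrow> b1 t > 0 \<and> b2 t = 0 \<and> b3 t = 0"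
  "2 < t \<Longrightarrow> b1 t > 0 \<and> b2 t = 0 \<and> b3 t = 0"
  "0 < t \<Longrightarrow> t < 1 \<Longrightarrow> b1 t = 0 \<and> b2 t > 0 \<and> b3 t = 0"
  "1 < t \<Longrightarrow> t < 2 \<Longrightarrow> b1 t = 0 \<and> b2 t = 0 \<and> b3 t > 0"
  by (auto simp: b1_def b2_def b3_def)


theorem proposition4:
  fixes \<gamma> :: "real \<Rightarrow> real^4" and B :: "real \<Rightarrow> nat \<Rightarrow> real^4"
  assumes "is_frame \<gamma> B" and "coeff_matrix B bishopB"
  shows "regular_curve \<gamma> \<and> \<not> (\<exists>F. typeC_frame \<gamma> F)"
proof
  have Bsm: "smooth_fun (\<lambda>t. B t 0)" and Bon: "\<And>t. \<forall>i<4. \<forall>j<4. B t i \<bullet> B t j = (if i = j then 1 else 0)"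
    and gd: "\<And>t. (\<gamma> has_vector_derivative B t 0) (at t)"
    using assms(1) unfolding is_frame_def by auto
  have Bd: "\<And>t i. i < 4 \<Longrightarrow> ((\<lambda>s. B s i) has_vector_derivative (\<Sum>j<4. bishopB t i j *\<^sub>R B t j)) (at t)"
    using assms(2) unfolding coeff_matrix_def by auto
  show "regular_curve \<gamma>"
  proof -
    obtain D where D0: "D 0 = (\<lambda>t. B t 0)" and DS: "\<And>n t. (D n has_vector_derivative D (Suc n) t) (at t)"
      using Bsm unfolding smooth_fun_def by blast
    define E where "E n = (if n = 0 then \<gamma> else D (n - 1))" for n
    have "(E n has_vector_derivative E (Suc n) t) (at t)" for n t
      using DS gd D0 by (cases n) (auto simp: E_def)
    moreover have "E 0 = \<gamma>" by (simp add: E_def)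
    ultimately have "smooth_fun \<gamma>" unfolding smooth_fun_def by blast
    moreover have "\<gamma> differentiable (at t) \<and> vector_derivative \<gamma> (at t) \<noteq> 0" for t
    proof
      show "\<gamma> differentiable (at t)" using gd[of t] by (rule differentiableI_vector)
      have "vector_derivative \<gamma> (at t) = B t 0" using gd[of t] by (rule vector_derivative_at)
      moreover have "B t 0 \<noteq> 0" using Bon[of t] by (metis inner_zero_left zero_less_numeral zero_neq_one)
      ultimately show "vector_derivative \<gamma> (at t) \<noteq> 0" by simp
    qed
    ultimately show ?thesis unfolding regular_curve_def by blast
  qed
  show "\<not> (\<exists>F. typeC_frame \<gamma> F)"
  proof
    assume "\<exists>F. typeC_frame \<gamma> F"
    then obtain F p x1 x2 x3 where Ffr: "is_frame \<gamma> F" and p: "p permutes {1,2,3}"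
      and cm: "coeff_matrix (\<lambda>t i. F t (p i)) (typeC_matrix x1 x2 x3)"
      unfolding typeC_frame_def by blast
    define G where "G t i = F t (p i)" for t i
    have p0: "p 0 = 0" using p by (simp add: permutes_not_in)
    have pl: "p i < 4" if "i < 4" for i
    proof (cases "i = 0")
      case True thus ?thesis using p0 by simp
    next
      case False
      hence "i \<in> {1,2,3}" using that by auto
      hence "p i \<in> {1,2,3}" using permutes_in_image[OF p] by simp
      thus ?thesis by auto
    qed
    have pinj: "p i = p j \<Longrightarrow> i = j" for i j using permutes_inj[OF p] by (simp add: inj_eq)
    have Fon: "\<And>t. \<forall>i<4. \<forall>j<4. F t i \<bullet> F t j = (if i = j then 1 else 0)"
      and Fg: "\<And>t. (\<gamma> has_vector_derivative F t 0) (at t)"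
      using Ffr unfolding is_frame_def by auto
    have Gon: "\<forall>i<4. \<forall>j<4. G t i \<bullet> G t j = (if i = j then 1 else 0)" for t
      using Fon[of t] pl pinj unfolding G_def by auto
    have G0: "G t 0 = B t 0" for t
      using vector_derivative_unique_at[OF Fg[of t] gd[of t]] p0 by (simp add: G_def)
    have Gd: "\<And>t i. i < 4 \<Longrightarrow> ((\<lambda>s. G s i) has_vector_derivative (\<Sum>j<4. typeC_matrix x1 x2 x3 t i j *\<^sub>R G t j)) (at t)"
      using cm unfolding coeff_matrix_def G_def by auto
    note BS = bishop_sums[of _ B] and GS = typeC_sums[of x1 x2 x3 _ G]
    have a: "b1 t * (G t 3 \<bullet> B t 1) + b2 t * (G t 3 \<bullet> B t 2) + b3 t * (G t 3 \<bullet> B t 3) = 0" for t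
    proof -
      have "((\<lambda>s. B s 0) has_vector_derivative (x1 t *\<^sub>R G t 1 + x2 t *\<^sub>R G t 2)) (at t)"
        using Gd[of 0 t] GS(1)[of t] G0 by simp
      moreover have "((\<lambda>s. B s 0) has_vector_derivative (b1 t *\<^sub>R B t 1 + b2 t *\<^sub>R B t 2 + b3 t *\<^sub>R B t 3)) (at t)"
        using Bd[of 0 t] BS(1)[of t] by simp
      ultimately have e: "b1 t *\<^sub>R B t 1 + b2 t *\<^sub>R B t 2 + b3 t *\<^sub>R B t 3 = x1 t *\<^sub>R G t 1 + x2 t *\<^sub>R G t 2"
        by (metis vector_derivative_unique_at)
      have "G t 3 \<bullet> (x1 t *\<^sub>R G t 1 + x2 t *\<^sub>R G t 2) = 0" using Gon[of t]
        by (simp add: inner_add_right)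
      hence "G t 3 \<bullet> (b1 t *\<^sub>R B t 1 + b2 t *\<^sub>R B t 2 + b3 t *\<^sub>R B t 3) = 0" using e by simp
      thus ?thesis by (simp add: inner_add_right)
    qed
    have G2d: "((\<lambda>s. G s 2) has_vector_derivative (- x2 t *\<^sub>R G t 0)) (at t)" for t
      using Gd[of 2 t] GS(2)[of t] by simp
    have c: "G s 2 \<bullet> B s i = G r 2 \<bullet> B r i" if "i \<in> {1,2,3}" for s r i
    proof -
      define bb where "bb = (if i = 1 then b1 else if i = 2 then b2 else b3)"
      have bbd: "((\<lambda>s. B s i) has_vector_derivative (- bb t *\<^sub>R B t 0)) (at t)" for t
      proof -
        have "i = 1 \<or> i = 2 \<or> i = 3" using that by auto
        thus ?thesis
        proof (elim disjE)
          assume i: "i = 1" show ?thesis using Bd[of 1 t] BS(2)[of t] by (simp add: i bb_def)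
        next
          assume i: "i = 2" show ?thesis using Bd[of 2 t] BS(3)[of t] by (simp add: i bb_def)
        next
          assume i: "i = 3" show ?thesis using Bd[of 3 t] BS(4)[of t] by (simp add: i bb_def)
        qed
      qed
      show ?thesis
      proof (rule inner_const[where u = "\<lambda>s. G s 2" and v = "\<lambda>s. B s i"])
        show "((\<lambda>s. G s 2) has_vector_derivative (- x2 t *\<^sub>R G t 0)) (at t)" for t by (rule G2d)
        show "((\<lambda>s. B s i) has_vector_derivative (- bb t *\<^sub>R B t 0)) (at t)" for t by (rule bbd)
        show "G t 2 \<bullet> (- bb t *\<^sub>R B t 0) + (- x2 t *\<^sub>R G t 0) \<bullet> B t i = 0" for t
        proof -
          have "G t 2 \<bullet> G t 0 = 0" using Gon[of t] by simp
          hence h1: "G t 2 \<bullet> B t 0 = 0" using G0[of t] by simp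
          have h2: "B t 0 \<bullet> B t i = 0" using Bon[of t] that by auto
          show ?thesis using h1 h2 G0[of t] by simp
        qed
      qed
    qed
    have cont: "isCont (\<lambda>t. G t 3 \<bullet> B t i) t" if "i < 4" for i t
      using Gd[of 3 t] Bd[of i t] that
      by (intro continuous_inner has_vector_derivative_continuous) auto
    have z1: "G t 3 \<bullet> B t 1 = 0" if "t < 0 \<or> t > 2" for t
      using a[of t] bvals(1,2)[of t] that by auto
    have z2: "G t 3 \<bullet> B t 2 = 0" if "0 < t" "t < 1" for t
      using a[of t] bvals(3)[of t] that by auto
    have z3: "G t 3 \<bullet> B t 3 = 0" if "1 < t" "t < 2" for t
      using a[of t] bvals(4)[of t] that by auto
    have d10: "G 0 3 \<bullet> B 0 1 = 0" by (rule zero_ends(2)[of _ "-1"]) (use cont z1 in auto)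
    have d12: "G 2 3 \<bullet> B 2 1 = 0" by (rule zero_ends(1)[of _ _ 3]) (use cont z1 in auto)
    have d20: "G 0 3 \<bullet> B 0 2 = 0" by (rule zero_ends(1)[of _ _ 1]) (use cont z2 in auto)
    have d21: "G 1 3 \<bullet> B 1 2 = 0" by (rule zero_ends(2)[of _ 0]) (use cont z2 in auto)
    have d31: "G 1 3 \<bullet> B 1 3 = 0" by (rule zero_ends(1)[of _ _ 2]) (use cont z3 in auto)
    have d32: "G 2 3 \<bullet> B 2 3 = 0" by (rule zero_ends(2)[of _ 1]) (use cont z3 in auto)
    have N0: "G t 3 \<bullet> B t 0 = 0" for t
    proof -
      have "G t 3 \<bullet> G t 0 = 0" using Gon[of t] by simp
      thus ?thesis using G0[of t] by simp
    qed
    have N1: "G t 3 \<bullet> G t 3 = 1" for t using Gon[of t] by auto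
    have VN: "G t 2 \<bullet> G t 3 = 0" for t using Gon[of t] by auto
    have e3: "G 0 2 \<bullet> B 0 3 = 0"
      by (rule key[OF Bon N1 VN]) (use d10 d20 N0 in \<open>auto simp: less_Suc_eq numeral_eq_Suc\<close>)
    have e1: "G 1 2 \<bullet> B 1 1 = 0"
      by (rule key[OF Bon N1 VN]) (use d21 d31 N0 in \<open>auto simp: less_Suc_eq numeral_eq_Suc\<close>)
    have e2: "G 2 2 \<bullet> B 2 2 = 0"
      by (rule key[OF Bon N1 VN]) (use d12 d32 N0 in \<open>auto simp: less_Suc_eq numeral_eq_Suc\<close>)
    have "G 0 2 = 0"
    proof (rule allzero[OF Bon])
      fix i :: nat assume "i < 4"
      hence "i = 0 \<or> i = 1 \<or> i = 2 \<or> i = 3" by auto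
      thus "G 0 2 \<bullet> B 0 i = 0"
      proof (elim disjE)
        assume i: "i = 0"
        have "G 0 2 \<bullet> G 0 0 = 0" using Gon[of 0] by simp
        thus ?thesis using G0[of 0] i by simp
      next
        assume "i = 1" thus ?thesis using e1 c[of 1 0 1] by simp
      next
        assume "i = 2" thus ?thesis using e2 c[of 2 0 2] by simp
      next
        assume "i = 3" thus ?thesis using e3 by simp
      qed
    qed
    moreover have "G 0 2 \<bullet> G 0 2 = 1" using Gon[of 0] by simp
    ultimately show False by simp
  qed
qed

end
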